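(* Let $0<p_0<1$, $\epsilon>0$, $\omega\ge0$, $\gamma_0\ge\gamma\ge0$, and suppose $p_0\le\frac12-\frac{\gamma_0+\gamma}{2\sqrt{4\epsilon^2+(\gamma_0+\gamma)^2}}$. Let $\omega(t),\epsilon_x(t),\epsilon_y(t),\delta\gamma_t$ be real-valued functions of time with $|\omega(t)|\le\omega$, $\sqrt{\epsilon_x^2(t)+\epsilon_y^2(t)}\le\epsilon$, $|\delta\gamma_t|\le\gamma$, and set $H(t)=[1+\omega(t)]I_z+\epsilon_x(t)I_x+\epsilon_y(t)I_y$, $\gamma_t=\gamma_0+\delta\gamma_t$. Let the qubit density matrix $\rho_t$ evolve according to $$\dot\rho_t=-i[H(t),\rho_t]+\gamma_t\Big(\sigma_-\rho_t\sigma_+-\tfrac12\sigma_+\sigma_-\rho_t-\tfrac12\rho_t\sigma_+\sigma_-\Big)$$ with $\rho_0=|0\rangle\langle0|$. Let $$T_a'=\frac{2p_0}{4\epsilon\sqrt{p_0-p_0^2}+2(\gamma_0+\gamma)(1-p_0)}.$$ Then for every $t\in[0,T_a']$, $\langle0|\rho_t|0\rangle\ge1-p_0$; equivalently, a projective measurement of $\sigma_z$ at time $t$ has probability of failure $\langle1|\rho_t|1\rangle\le p_0$.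
   Context: $\sigma_x,\sigma_y,\sigma_z$ are the Pauli matrices $\begin{pmatrix}0&1\\1&0\end{pmatrix},\begin{pmatrix}0&-i\\i&0\end{pmatrix},\begin{pmatrix}1&0\\0&-1\end{pmatrix}$, $I_j=\frac12\sigma_j$, $\sigma_-=\frac12(\sigma_x-i\sigma_y)$, $\sigma_+=\frac12(\sigma_x+i\sigma_y)$, $[A,B]=AB-BA$. $|0\rangle=(1,0)^T$, $|1\rangle=(0,1)^T$. Units with $\hbar=1$. *)

theory Defs
  imports "HOL-Analysis.Analysis"
begin

text \<open>Qubit operators are 2x2 complex matrices of type complex^2^2; index 1 is the
first basis vector |0>, index 2 the second basis vector |1>.\<close>

type_synonym qmat = "complex^2^2"
type_synonym qvec = "complex^2"

definition mat2 :: "complex \<Rightarrow> complex \<Rightarrow> complex \<Rightarrow> complex \<Rightarrow> qmat" where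
  "mat2 a b c d = vector [vector [a, b], vector [c, d]]"

definition cscale :: "complex \<Rightarrow> qmat \<Rightarrow> qmat" where
  "cscale c A = (\<chi> i j. c * A $ i $ j)"

definition sigma_x :: qmat where "sigma_x = mat2 0 1 1 0"
definition sigma_y :: qmat where "sigma_y = mat2 0 (-\<i>) \<i> 0"
definition sigma_z :: qmat where "sigma_z = mat2 1 0 0 (-1)"

definition I_x :: qmat where "I_x = (1/2) *\<^sub>R sigma_x"
definition I_y :: qmat where "I_y = (1/2) *\<^sub>R sigma_y"
definition I_z :: qmat where "I_z = (1/2) *\<^sub>R sigma_z"

definition sigma_minus :: qmat where "sigma_minus = (1/2) *\<^sub>R (sigma_x - cscale \<i> sigma_y)"
definition sigma_plus :: qmat where "sigma_plus = (1/2) *\<^sub>R (sigma_x + cscale \<i> sigma_y)"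

definition commutator :: "qmat \<Rightarrow> qmat \<Rightarrow> qmat" where
  "commutator A B = A ** B - B ** A"

definition ket0 :: qvec where "ket0 = vector [1, 0]"
definition ket1 :: qvec where "ket1 = vector [0, 1]"

definition outer :: "qvec \<Rightarrow> qvec \<Rightarrow> qmat" where
  "outer u v = (\<chi> i j. u $ i * cnj (v $ j))"

definition braket :: "qvec \<Rightarrow> qmat \<Rightarrow> qvec \<Rightarrow> complex" where
  "braket u A v = (\<Sum>i\<in>UNIV. cnj (u $ i) * (A *v v) $ i)"

definition lindblad :: "qmat \<Rightarrow> real \<Rightarrow> qmat \<Rightarrow> qmat" where
  "lindblad H g \<rho> = cscale (-\<i>) (commutator H \<rho>)
     + g *\<^sub>R (sigma_minus ** \<rho> ** sigma_plus
               - (1/2) *\<^sub>R (sigma_plus ** sigma_minus ** \<rho>)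
               - (1/2) *\<^sub>R (\<rho> ** sigma_plus ** sigma_minus))"

end

theory Submission
  imports Defs
begin

lemma sum2: "(\<Sum>i\<in>(UNIV::2 set). f i) = f 1 + f 2"
  by (simp add: UNIV_2)
lemma mat2_nth[simp]: "mat2 a b c d $ 1 $ 1 = a" "mat2 a b c d $ 1 $ 2 = b"
  "mat2 a b c d $ 2 $ 1 = c" "mat2 a b c d $ 2 $ 2 = d"
  by (simp_all add: mat2_def)
lemma mat2_eta: "A = mat2 (A$1$1) (A$1$2) (A$2$1) (A$2$2)"
  by (simp add: vec_eq_iff forall_2)
lemma mat2_mult[simp]: "mat2 a b c d ** mat2 e f g h = mat2 (a*e+b*g) (a*f+b*h) (c*e+d*g) (c*f+d*h)"
  by (simp add: vec_eq_iff forall_2 matrix_matrix_mult_def sum2)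
lemma mat2_add[simp]: "mat2 a b c d + mat2 e f g h = mat2 (a+e) (b+f) (c+g) (d+h)"
  by (simp add: vec_eq_iff forall_2)
lemma mat2_diff[simp]: "mat2 a b c d - mat2 e f g h = mat2 (a-e) (b-f) (c-g) (d-h)"
  by (simp add: vec_eq_iff forall_2)
lemma mat2_scaleR[simp]: "x *\<^sub>R mat2 a b c d = mat2 (x*\<^sub>R a) (x*\<^sub>R b) (x*\<^sub>R c) (x*\<^sub>R d)"
  by (simp add: vec_eq_iff forall_2)
lemma mat2_cscale[simp]: "cscale x (mat2 a b c d) = mat2 (x*a) (x*b) (x*c) (x*d)"
  by (simp add: vec_eq_iff forall_2 cscale_def)
lemma sm: "sigma_minus = mat2 0 0 1 0" "sigma_plus = mat2 0 1 0 0"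
   apply (simp_all add: sigma_minus_def sigma_plus_def sigma_x_def sigma_y_def)
  by (simp_all add: scaleR_conv_of_real)
lemma lind:
  fixes r :: "complex^2^2" and W ex ey g :: real
  defines "L \<equiv> lindblad (W *\<^sub>R I_z + ex *\<^sub>R I_x + ey *\<^sub>R I_y) g r"
  shows "L $ 1 $ 1 = - \<i> * ((ex - \<i>*ey)/2 * r$2$1 - r$1$2 * (ex + \<i>*ey)/2) - g * r$1$1"
    and "L $ 1 $ 2 = - \<i> * (W * r$1$2 + (ex - \<i>*ey)/2 * (r$2$2 - r$1$1)) - g * r$1$2 / 2"
    and "L $ 2 $ 1 = - \<i> * ((ex + \<i>*ey)/2 * (r$1$1 - r$2$2) - W * r$2$1) - g * r$2$1 / 2"
    and "L $ 2 $ 2 = - \<i> * ((ex + \<i>*ey)/2 * r$1$2 - r$2$1 * (ex - \<i>*ey)/2) + g * r$1$1"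
proof -
  obtain a b c d where r: "r = mat2 a b c d" using mat2_eta by blast
  show "L $ 1 $ 1 = - \<i> * ((ex - \<i>*ey)/2 * r$2$1 - r$1$2 * (ex + \<i>*ey)/2) - g * r$1$1"
    "L $ 1 $ 2 = - \<i> * (W * r$1$2 + (ex - \<i>*ey)/2 * (r$2$2 - r$1$1)) - g * r$1$2 / 2"
    "L $ 2 $ 1 = - \<i> * ((ex + \<i>*ey)/2 * (r$1$1 - r$2$2) - W * r$2$1) - g * r$2$1 / 2"
    "L $ 2 $ 2 = - \<i> * ((ex + \<i>*ey)/2 * r$1$2 - r$2$1 * (ex - \<i>*ey)/2) + g * r$1$1"
  unfolding L_def lindblad_def commutator_def  sm I_x_def I_y_def I_z_def
     sigma_x_def sigma_y_def sigma_z_def r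
  apply (simp_all)
  apply (simp_all add: scaleR_conv_of_real field_simps)
  done
qed
lemma braket_simps: "braket ket0 r ket0 = r$1$1" "braket ket1 r ket1 = r$2$2" "outer ket0 ket0 = mat2 1 0 0 0"
  by (simp_all add: braket_def ket0_def ket1_def outer_def matrix_vector_mult_def sum2 vec_eq_iff forall_2)

lemma lindR:
  fixes r :: "complex^2^2" and W ex ey g :: real
  defines "L \<equiv> lindblad (W  *\<^sub>R I_z + ex  *\<^sub>R I_x + ey  *\<^sub>R I_y) g r"
  defines "A1 \<equiv> Re (r$1$1)" and "A2 \<equiv> Im (r$1$1)" and "B1 \<equiv> Re (r$1$2)" and "B2 \<equiv> Im (r$1$2)"
  defines "C1 \<equiv> Re (r$2$1)" and "C2 \<equiv> Im (r$2$1)" and "D1 \<equiv> Re (r$2$2)" and "D2 \<equiv> Im (r$2$2)"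
  defines "hx \<equiv> ex/2" and "hy \<equiv> ey/2"
  shows "Re (L$1$1) = hx * C2 - hy * C1 - hy * B1 - hx * B2 - g * A1"
    and "Im (L$1$1) = - hx * C1 - hy * C2 + hx * B1 - hy * B2 - g * A2"
    and "Re (L$2$2) = - (hx * C2 - hy * C1 - hy * B1 - hx * B2 - g * A1)"
    and "Im (L$2$2) = - (- hx * C1 - hy * C2 + hx * B1 - hy * B2 - g * A2)"
    and "Re (L$1$2) = W * B2 + hx * (D2-A2) - hy * (D1-A1) - g * B1/2"
    and "Im (L$1$2) = -(W * B1 + hx * (D1-A1) + hy * (D2-A2)) - g * B2/2"
    and "Re (L$2$1) = -hx * (D2-A2) - hy * (D1-A1) - W * C2 - g * C1/2"
    and "Im (L$2$1) = hx * (D1-A1) - hy * (D2-A2) + W * C1 - g * C2/2"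
  unfolding L_def lind A1_def A2_def B1_def B2_def C1_def C2_def D1_def D2_def hx_def hy_def
  by (simp_all add: field_simps)



lemma comp_deriv:
  fixes \<rho> :: "real \<Rightarrow> complex^2^2"
  assumes "(\<rho> has_vector_derivative D) F"
  shows "((\<lambda>t. Re (\<rho> t $ i $ j)) has_real_derivative Re (D $ i $ j)) F"
    and "((\<lambda>t. Im (\<rho> t $ i $ j)) has_real_derivative Im (D $ i $ j)) F"
proof -
  have bl1: "bounded_linear (\<lambda>M::complex^2^2. Re (M $ i $ j))"
    using bounded_linear_compose[OF bounded_linear_Re
        bounded_linear_compose[OF bounded_linear_vec_nth bounded_linear_vec_nth]] by fast
  have bl2: "bounded_linear (\<lambda>M::complex^2^2. Im (M $ i $ j))"
    using bounded_linear_compose[OF bounded_linear_Im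
        bounded_linear_compose[OF bounded_linear_vec_nth bounded_linear_vec_nth]] by fast
  show "((\<lambda>t. Re (\<rho> t $ i $ j)) has_real_derivative Re (D $ i $ j)) F"
    using bounded_linear.has_vector_derivative[OF bl1 assms]
    by (simp add: has_real_derivative_iff_has_vector_derivative)
  show "((\<lambda>t. Im (\<rho> t $ i $ j)) has_real_derivative Im (D $ i $ j)) F"
    using bounded_linear.has_vector_derivative[OF bl2 assms]
    by (simp add: has_real_derivative_iff_has_vector_derivative)
qed

lemma barrierA:
  fixes f :: "real \<Rightarrow> real"
  assumes cont: "continuous_on {a..b} f" and ab: "a \<le> b" and fa: "f a \<ge> 0"
    and d: "\<And>t. a < t \<Longrightarrow> t < b \<Longrightarrow> f t < 0 \<Longrightarrow> \<exists>y. DERIV f t :> y \<and> y \<ge> 0"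
  shows "f b \<ge> 0"
proof (rule ccontr)
  assume fb: "\<not> f b \<ge> 0"
  let ?S = "{s\<in>{a..b}. f s \<ge> 0}"
  have "closed ?S" using continuous_closed_preimage[OF cont closed_atLeastAtMost, of "{0..}"]
    by (simp add: vimage_def Int_def conj_commute)
  moreover have "bounded ?S" by (rule bounded_subset[of "{a..b}"]) auto
  ultimately have cS: "compact ?S" by (simp add: compact_eq_bounded_closed)
  moreover have ne: "?S \<noteq> {}"
  proof -
    have "a \<in> ?S" using fa ab by auto
    then show ?thesis by blast
  qed
  obtain t0 where t0: "t0 \<in> ?S" "\<And>s. s \<in> ?S \<Longrightarrow> s \<le> t0"
    using compact_attains_sup[OF cS ne] by blast
  have "t0 < b" using t0(1) fb by (cases "t0 = b") auto
  have neg: "f s < 0" if "t0 < s" "s \<le> b" for s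
  proof (rule ccontr)
    assume "\<not> f s < 0"
    then have "s \<in> ?S" using that t0(1) by auto
    then show False using t0(2) that by force
  qed
  have "f t0 \<le> f b"
  proof (rule DERIV_nonneg_imp_increasing_open[of t0 b f])
    show "t0 \<le> b" using \<open>t0 < b\<close> by simp
    show "continuous_on {t0..b} f" using cont t0(1) by (auto intro: continuous_on_subset)
    fix x assume "t0 < x" "x < b"
    then show "\<exists>y. DERIV f x :> y \<and> y \<ge> 0" using d neg t0(1) by auto
  qed
  then show False using t0(1) fb by auto
qed

lemma barrierB:
  fixes f :: "real \<Rightarrow> real"
  assumes cont: "continuous_on {0..b} f" and b: "0 \<le> b" and f0: "f 0 > 0"
    and d: "\<And>t. 0 < t \<Longrightarrow> t < b \<Longrightarrow> (\<forall>s\<in>{0..t}. f s > 0) \<Longrightarrow> \<exists>y. DERIV f t :> y \<and> y \<ge> 0"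
  shows "f b > 0"
proof (rule ccontr)
  assume fb: "\<not> f b > 0"
  let ?S = "{s\<in>{0..b}. f s \<le> 0}"
  have "closed ?S" using continuous_closed_preimage[OF cont closed_atLeastAtMost, of "{..0}"]
    by (simp add: vimage_def Int_def conj_commute)
  moreover have "bounded ?S" by (rule bounded_subset[of "{0..b}"]) auto
  ultimately have cS: "compact ?S" by (simp add: compact_eq_bounded_closed)
  moreover have ne: "?S \<noteq> {}"
  proof -
    have "b \<in> ?S" using fb b by auto
    then show ?thesis by blast
  qed
  obtain t0 where t0: "t0 \<in> ?S" "\<And>s. s \<in> ?S \<Longrightarrow> t0 \<le> s"
    using compact_attains_inf[OF cS ne] by blast
  have "0 < t0" using t0(1) f0 by (cases "t0 = 0") auto
  have pos: "f s > 0" if "0 \<le> s" "s < t0" for s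
  proof (rule ccontr)
    assume "\<not> f s > 0"
    then have "s \<in> ?S" using that t0(1) by auto
    then show False using t0(2) that by force
  qed
  have "f 0 \<le> f t0"
  proof (rule DERIV_nonneg_imp_increasing_open[of 0 t0 f])
    show "0 \<le> t0" using \<open>0 < t0\<close> by simp
    show "continuous_on {0..t0} f" using cont t0(1) by (auto intro: continuous_on_subset)
    fix x assume x: "0 < x" "x < t0"
    have "\<forall>s\<in>{0..x}. f s > 0" using pos x by auto
    then show "\<exists>y. DERIV f x :> y \<and> y \<ge> 0" using d x t0(1) by auto
  qed
  then show False using t0(1) f0 by auto
qed

lemma monoW:
  fixes f :: "real \<Rightarrow> real"
  assumes c: "continuous_on {0..} f" and d: "\<And>t. 0 < t \<Longrightarrow> DERIV f t :> f' t"
    and ab: "0 \<le> a" "a \<le> b" and nn: "\<And>t. a < t \<Longrightarrow> t < b \<Longrightarrow> f' t \<ge> 0"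
  shows "f a \<le> f b"
proof (rule DERIV_nonneg_imp_increasing_open[of a b f])
  show "a \<le> b" by fact
  show "continuous_on {a..b} f" by (rule continuous_on_subset[OF c]) (use ab in auto)
  fix x assume x: "a < x" "x < b"
  then show "\<exists>y. DERIV f x :> y \<and> y \<ge> 0" using nn[OF x] d[of x] ab by auto
qed

lemma cont_from:
  fixes f :: "real \<Rightarrow> real"
  assumes "\<And>t. 0 \<le> t \<Longrightarrow> (f has_real_derivative D t) (at t within {0..})"
  shows "continuous_on {0..} f"
  unfolding continuous_on_eq_continuous_within by (metis DERIV_continuous assms atLeast_iff)


lemma arith_cond:
  fixes p0 \<epsilon> G :: real
  assumes p0: "0 < p0" "p0 < 1" and e: "0 < \<epsilon>" and G: "0 \<le> G"
    and h: "p0 \<le> 1/2 - G / (2 * sqrt (4 * \<epsilon>^2 + G^2))"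
  shows "p0 \<le> 1/2" "G * p0 \<le> \<epsilon> * sqrt (p0 - p0^2)"
proof -
  define S where "S = sqrt (4*\<epsilon>^2 + G^2)"
  have S2: "S^2 = 4*\<epsilon>^2+G^2" unfolding S_def by simp
  have Spos: "S > 0" unfolding S_def using e by (simp add: add_pos_nonneg)
  have SG: "G \<le> S" unfolding S_def by (rule real_le_rsqrt) simp
  have "G/(2*S) \<ge> 0" using Spos G by simp
  then show "p0 \<le> 1/2" using h S_def by simp
  have h2: "p0 * (2*S) \<le> S - G"
  proof -
    have "p0 * (2*S) \<le> (1/2 - G/(2*S)) * (2*S)" using h Spos S_def by (intro mult_right_mono) auto
    also have "\<dots> = S - G" using Spos by (simp add: field_simps)
    finally show ?thesis .
  qed
  have sgp: "S + G > 0" using Spos G by simp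
  have e1: "(S-G)*(S+G) = 4*\<epsilon>^2" using S2 by (simp add: algebra_simps power2_eq_square)
  have "G*G \<le> S*G" using SG G by (rule mult_right_mono)
  moreover have "S*(S+G) = 4*\<epsilon>^2 + G^2 + S*G" using S2 by (simp add: algebra_simps power2_eq_square)
  ultimately have "2*(G^2+\<epsilon>^2) \<le> S*(S+G)"
    by (smt (verit) power2_eq_square zero_le_square)
  note sq = this
  have "(S-G)*(S+G)*(G^2+\<epsilon>^2) = 2*\<epsilon>^2 * (2*(G^2+\<epsilon>^2))" using e1 by simp
  also have "\<dots> \<le> 2*\<epsilon>^2 * (S*(S+G))" by (rule mult_left_mono) (use sq in auto)
  also have "\<dots> = (2*S*\<epsilon>^2)*(S+G)" by (simp add: algebra_simps)
  finally have "((S-G)*(G^2+\<epsilon>^2))*(S+G) \<le> (2*S*\<epsilon>^2)*(S+G)" by (simp add: algebra_simps)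
  then have key: "(S - G)*(G^2+\<epsilon>^2) \<le> 2*S*\<epsilon>^2" using sgp
    by (rule mult_right_le_imp_le)
  have "p0 * (2*S) * (G^2+\<epsilon>^2) \<le> (S - G)*(G^2+\<epsilon>^2)" using h2 by (intro mult_right_mono) auto
  then have "p0 * (G^2+\<epsilon>^2) * (2*S) \<le> \<epsilon>^2 * (2*S)" using key by (simp add: algebra_simps)
  then have k2: "p0 * (G^2+\<epsilon>^2) \<le> \<epsilon>^2" using Spos by simp
  have "0 \<le> p0*(1-p0)" using p0 by simp
  then have nn: "0 \<le> p0 - p0^2" by (simp add: power2_eq_square algebra_simps)
  have "(G*p0)^2 = p0 * (p0 * G^2)" by (simp add: power2_eq_square)
  also have "\<dots> \<le> p0 * (\<epsilon>^2 * (1 - p0))" using k2 p0 by (intro mult_left_mono) (auto simp: algebra_simps)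
  also have "\<dots> = \<epsilon>^2 * (p0 - p0^2)" by (simp add: algebra_simps power2_eq_square)
  also have "\<dots> = (\<epsilon> * sqrt (p0 - p0^2))^2" using nn by (simp add: power_mult_distrib)
  finally have "(G*p0)^2 \<le> (\<epsilon> * sqrt (p0 - p0^2))^2" .
  then show "G * p0 \<le> \<epsilon> * sqrt (p0 - p0^2)"
    by (rule power2_le_imp_le) (use e nn in simp)
qed
lemma rate_bound:
  fixes hx hy B1 B2 P \<epsilon> q G g p0 :: real
  assumes h: "hx^2 + hy^2 \<le> \<epsilon>^2/4" and b: "B1^2 + B2^2 \<le> (1-P)*P"
    and P: "0 \<le> P" "P \<le> p0" and p0: "p0 \<le> 1/2" and e: "0 \<le> \<epsilon>"
    and q: "q = sqrt (p0 - p0^2)" and g: "0 \<le> g" "g \<le> G" and Gp: "G*p0 \<le> \<epsilon>*q"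
  shows "2*hx*B2 + 2*hy*B1 + g*(1-P) \<le> 2*\<epsilon>*q + G*(1-p0)"
proof -
  have id: "(hx^2+hy^2)*(B1^2+B2^2) = (hx*B1 - hy*B2)^2 + (hx*B2+hy*B1)^2"
    by (simp add: algebra_simps power2_eq_square)
  have c1: "(hx*B2 + hy*B1)^2 \<le> (hx^2+hy^2)*(B1^2+B2^2)" unfolding id by simp
  have "(1-P)*P - (p0 - p0^2) = (p0 - P)*(p0 + P - 1)" by (simp add: algebra_simps power2_eq_square)
  also have "\<dots> \<le> 0" using P p0 by (intro mult_nonneg_nonpos) auto
  finally have pp: "(1-P)*P \<le> p0 - p0^2" by simp
  have "0 \<le> p0" using P by simp
  then have "0 \<le> p0*(1-p0)" using p0 by simp
  then have nn: "0 \<le> p0 - p0^2" by (simp add: power2_eq_square algebra_simps)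
  have bb: "B1^2 + B2^2 \<le> p0 - p0^2" using b pp by linarith
  have "(hx^2+hy^2)*(B1^2+B2^2) \<le> (\<epsilon>^2/4) * (p0 - p0^2)"
    by (rule mult_mono[OF h bb]) simp_all
  also have "\<dots> = (\<epsilon>*q/2)^2" using nn unfolding q by (simp add: power_mult_distrib power_divide)
  finally have "(hx*B2 + hy*B1)^2 \<le> (\<epsilon>*q/2)^2" using c1 by linarith
  then have s: "hx*B2 + hy*B1 \<le> \<epsilon>*q/2"
    by (rule power2_le_imp_le) (use e q nn in simp)
  have "g*(1-P) \<le> g*1" using g P p0 by (intro mult_left_mono) auto
  then have "g*(1-P) \<le> G" using g by simp
  then show ?thesis using s Gp by (simp add: algebra_simps)
qed

theorem corollary1:
  fixes p0 \<epsilon> \<omega> \<gamma>0 \<gamma> :: real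
    and \<omega>t \<epsilon>x \<epsilon>y \<delta>\<gamma> :: "real \<Rightarrow> real"
    and \<rho> :: "real \<Rightarrow> complex^2^2"
  assumes "0 < p0" "p0 < 1" "0 < \<epsilon>" "0 \<le> \<omega>" "0 \<le> \<gamma>" "\<gamma> \<le> \<gamma>0"
    and "p0 \<le> 1/2 - (\<gamma>0 + \<gamma>) / (2 * sqrt (4 * \<epsilon>^2 + (\<gamma>0 + \<gamma>)^2))"
    and "\<And>t. t \<ge> 0 \<Longrightarrow> \<bar>\<omega>t t\<bar> \<le> \<omega>"
    and "\<And>t. t \<ge> 0 \<Longrightarrow> sqrt ((\<epsilon>x t)^2 + (\<epsilon>y t)^2) \<le> \<epsilon>"
    and "\<And>t. t \<ge> 0 \<Longrightarrow> \<bar>\<delta>\<gamma> t\<bar> \<le> \<gamma>"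
    and "\<And>t. t \<ge> 0 \<Longrightarrow>
           (\<rho> has_vector_derivative
              lindblad ((1 + \<omega>t t) *\<^sub>R I_z + \<epsilon>x t *\<^sub>R I_x + \<epsilon>y t *\<^sub>R I_y)
                       (\<gamma>0 + \<delta>\<gamma> t) (\<rho> t)) (at t within {0..})"
    and "\<rho> 0 = outer ket0 ket0"
  shows "\<forall>t \<in> {0 .. 2 * p0 / (4 * \<epsilon> * sqrt (p0 - p0^2) + 2 * (\<gamma>0 + \<gamma>) * (1 - p0))}.
           braket ket0 (\<rho> t) ket0 \<in> \<real> \<and> 1 - p0 \<le> Re (braket ket0 (\<rho> t) ket0)
         \<and> Re (braket ket1 (\<rho> t) ket1) \<le> p0"
proof -
  define G where "G = \<gamma>0 + \<gamma>"
  define q where "q = sqrt (p0 - p0^2)"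
  define R where "R = 2*\<epsilon>*q + G*(1-p0)"
  have G0: "0 \<le> G" using assms(5,6) G_def by simp
  have h7: "p0 \<le> 1/2 - G / (2 * sqrt (4 * \<epsilon>^2 + G^2))" using assms(7) unfolding G_def .
  have p0h: "p0 \<le> 1/2" by (rule arith_cond(1)[OF assms(1,2,3) G0 h7])
  have Gp: "G*p0 \<le> \<epsilon>*q" unfolding q_def by (rule arith_cond(2)[OF assms(1,2,3) G0 h7])
  have "0 < p0*(1-p0)" using assms(1,2) by simp
  then have "0 < p0 - p0^2" by (simp add: power2_eq_square algebra_simps)
  then have qpos: "0 < q" unfolding q_def by simp
  have "0 < 2*\<epsilon>*q" using qpos assms(3) by simp
  moreover have "0 \<le> G*(1-p0)" using G0 assms(2) by simp
  ultimately have Rpos: "0 < R" unfolding R_def by linarith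
  define T where "T = p0 / R"
  have den: "4 * \<epsilon> * sqrt (p0 - p0^2) + 2 * (\<gamma>0 + \<gamma>) * (1 - p0) = 2 * R"
    unfolding R_def q_def G_def by (simp add: algebra_simps)
  have Teq: "2 * p0 / (4 * \<epsilon> * sqrt (p0 - p0^2) + 2 * (\<gamma>0 + \<gamma>) * (1 - p0)) = T"
    unfolding den T_def by simp
  have RT: "R * T = p0" unfolding T_def using Rpos by simp
  have T0: "0 < T" unfolding T_def using Rpos assms(1) by simp

  define L where "L t = lindblad ((1 + \<omega>t t) *\<^sub>R I_z + \<epsilon>x t *\<^sub>R I_x + \<epsilon>y t *\<^sub>R I_y) (\<gamma>0 + \<delta>\<gamma> t) (\<rho> t)" for t
  have der: "(\<rho> has_vector_derivative L t) (at t within {0..})" if "0 \<le> t" for t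
    using assms(11)[OF that] unfolding L_def .
  have derat: "(\<rho> has_vector_derivative L t) (at t)" if "0 < t" for t
  proof -
    have "at t within {0..} = at t" using that by (intro at_within_interior) auto
    then show ?thesis using der[of t] that by simp
  qed
  define gg where "gg t = \<gamma>0 + \<delta>\<gamma> t" for t
  have gg0: "0 \<le> gg t" and ggG: "gg t \<le> G" if "0 \<le> t" for t
    using assms(10)[OF that] assms(6) unfolding gg_def G_def by auto
  define hx where "hx t = \<epsilon>x t / 2" for t
  define hy where "hy t = \<epsilon>y t / 2" for t
  have hb: "hx t ^2 + hy t ^2 \<le> \<epsilon>^2/4" if "0 \<le> t" for t
  proof -
    have "sqrt ((\<epsilon>x t)^2 + (\<epsilon>y t)^2) ^2 \<le> \<epsilon>^2"
      using assms(9)[OF that] by (intro power_mono) auto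
    then have "(\<epsilon>x t)^2 + (\<epsilon>y t)^2 \<le> \<epsilon>^2" by simp
    then show ?thesis unfolding hx_def hy_def by (simp add: power_divide)
  qed

  have cR: "continuous_on {0..} (\<lambda>t. Re (\<rho> t $ i $ j))" for i j
  proof (rule cont_from)
    fix t :: real assume "0 \<le> t"
    then show "((\<lambda>t. Re (\<rho> t $ i $ j)) has_real_derivative Re (L t $ i $ j)) (at t within {0..})"
      by (rule comp_deriv(1)[OF der])
  qed
  have cI: "continuous_on {0..} (\<lambda>t. Im (\<rho> t $ i $ j))" for i j
  proof (rule cont_from)
    fix t :: real assume "0 \<le> t"
    then show "((\<lambda>t. Im (\<rho> t $ i $ j)) has_real_derivative Im (L t $ i $ j)) (at t within {0..})"
      by (rule comp_deriv(2)[OF der])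
  qed
  have dR: "DERIV (\<lambda>t. Re (\<rho> t $ i $ j)) t :> Re (L t $ i $ j)" if "0 < t" for i j t
    by (rule comp_deriv(1)[OF derat[OF that]])
  have dI: "DERIV (\<lambda>t. Im (\<rho> t $ i $ j)) t :> Im (L t $ i $ j)" if "0 < t" for i j t
    by (rule comp_deriv(2)[OF derat[OF that]])

  define A1 where "A1 = (\<lambda>t. Re (\<rho> t $ 1 $ 1))"
  define A2 where "A2 = (\<lambda>t. Im (\<rho> t $ 1 $ 1))"
  define B1 where "B1 = (\<lambda>t. Re (\<rho> t $ 1 $ 2))"
  define B2 where "B2 = (\<lambda>t. Im (\<rho> t $ 1 $ 2))"
  define C1 where "C1 = (\<lambda>t. Re (\<rho> t $ 2 $ 1))"
  define C2 where "C2 = (\<lambda>t. Im (\<rho> t $ 2 $ 1))"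
  define D1 where "D1 = (\<lambda>t. Re (\<rho> t $ 2 $ 2))"
  define D2 where "D2 = (\<lambda>t. Im (\<rho> t $ 2 $ 2))"
  note cdefs = A1_def A2_def B1_def B2_def C1_def C2_def D1_def D2_def
  have cont: "continuous_on {0..} A1" "continuous_on {0..} A2" "continuous_on {0..} B1"
    "continuous_on {0..} B2" "continuous_on {0..} C1" "continuous_on {0..} C2"
    "continuous_on {0..} D1" "continuous_on {0..} D2"
    unfolding cdefs by (rule cR cI)+
  note LR = lindR[of "1 + \<omega>t t" "\<epsilon>x t" "\<epsilon>y t" "\<gamma>0 + \<delta>\<gamma> t" "\<rho> t" for t]
  have dA1: "DERIV A1 t :> hx t * C2 t - hy t * C1 t - hy t * B1 t - hx t * B2 t - gg t * A1 t"
   and dA2: "DERIV A2 t :> - hx t * C1 t - hy t * C2 t + hx t * B1 t - hy t * B2 t - gg t * A2 t"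
   and dD1: "DERIV D1 t :> - (hx t * C2 t - hy t * C1 t - hy t * B1 t - hx t * B2 t - gg t * A1 t)"
   and dD2: "DERIV D2 t :> - (- hx t * C1 t - hy t * C2 t + hx t * B1 t - hy t * B2 t - gg t * A2 t)"
   and dB1: "DERIV B1 t :> (1 + \<omega>t t) * B2 t + hx t * (D2 t - A2 t) - hy t * (D1 t - A1 t) - gg t * B1 t / 2"
   and dB2: "DERIV B2 t :> -((1 + \<omega>t t) * B1 t + hx t * (D1 t - A1 t) + hy t * (D2 t - A2 t)) - gg t * B2 t / 2"
   and dC1: "DERIV C1 t :> - hx t * (D2 t - A2 t) - hy t * (D1 t - A1 t) - (1 + \<omega>t t) * C2 t - gg t * C1 t / 2"
   and dC2: "DERIV C2 t :> hx t * (D1 t - A1 t) - hy t * (D2 t - A2 t) + (1 + \<omega>t t) * C1 t - gg t * C2 t / 2"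
    if "0 < t" for t
    unfolding cdefs hx_def hy_def gg_def
    using dR[OF that, of 1 1] dI[OF that, of 1 1] dR[OF that, of 2 2] dI[OF that, of 2 2]
      dR[OF that, of 1 2] dI[OF that, of 1 2] dR[OF that, of 2 1] dI[OF that, of 2 1]
    unfolding L_def LR by simp_all

  have init: "A1 0 = 1" "A2 0 = 0" "B1 0 = 0" "B2 0 = 0" "C1 0 = 0" "C2 0 = 0" "D1 0 = 0" "D2 0 = 0"
    unfolding cdefs assms(12) braket_simps by simp_all

  have tr1: "A1 t + D1 t = 1" and tr2: "A2 t + D2 t = 0" if "0 \<le> t" for t
  proof -
    have c1: "continuous_on {0..} (\<lambda>t. A1 t + D1 t)" "continuous_on {0..} (\<lambda>t. -(A1 t + D1 t))"
      "continuous_on {0..} (\<lambda>t. A2 t + D2 t)" "continuous_on {0..} (\<lambda>t. -(A2 t + D2 t))"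
      using cont by (auto intro!: continuous_intros)
    have d1: "DERIV (\<lambda>t. A1 t + D1 t) s :> 0" "DERIV (\<lambda>t. -(A1 t + D1 t)) s :> 0"
      "DERIV (\<lambda>t. A2 t + D2 t) s :> 0" "DERIV (\<lambda>t. -(A2 t + D2 t)) s :> 0" if "0 < s" for s
      using DERIV_add[OF dA1[OF that] dD1[OF that]] DERIV_add[OF dA2[OF that] dD2[OF that]]
        DERIV_minus[OF DERIV_add[OF dA1[OF that] dD1[OF that]]] DERIV_minus[OF DERIV_add[OF dA2[OF that] dD2[OF that]]]
      by simp_all
    have "(\<lambda>t. A1 t + D1 t) 0 \<le> (\<lambda>t. A1 t + D1 t) t" by (rule monoW[OF c1(1) d1(1)]) (use that in auto)
    moreover have "(\<lambda>t. -(A1 t + D1 t)) 0 \<le> (\<lambda>t. -(A1 t + D1 t)) t" by (rule monoW[OF c1(2) d1(2)]) (use that in auto)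
    moreover have "(\<lambda>t. A2 t + D2 t) 0 \<le> (\<lambda>t. A2 t + D2 t) t" by (rule monoW[OF c1(3) d1(3)]) (use that in auto)
    moreover have "(\<lambda>t. -(A2 t + D2 t)) 0 \<le> (\<lambda>t. -(A2 t + D2 t)) t" by (rule monoW[OF c1(4) d1(4)]) (use that in auto)
    ultimately show "A1 t + D1 t = 1" "A2 t + D2 t = 0" using init by auto
  qed

  define E where "E t = - (4 * A2 t ^2 + (B1 t - C1 t)^2 + (B2 t + C2 t)^2)" for t
  have herm: "A2 t = 0 \<and> C1 t = B1 t \<and> C2 t = - B2 t" if "0 \<le> t" for t
  proof -
    have cE: "continuous_on {0..} E" unfolding E_def using cont by (auto intro!: continuous_intros)
    have dE: "DERIV E s :> gg s * (8 * A2 s ^2 + (B1 s - C1 s)^2 + (B2 s + C2 s)^2)" if "0 < s" for s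
    proof -
      note X = DERIV_minus[OF DERIV_add[OF DERIV_add[OF DERIV_cmult[where c=4, OF DERIV_power[where n=2, OF dA2[OF that]]]
          DERIV_power[where n=2, OF DERIV_diff[OF dB1[OF that] dC1[OF that]]]]
          DERIV_power[where n=2, OF DERIV_add[OF dB2[OF that] dC2[OF that]]]]]
      have "D2 s = - A2 s" using tr2[of s] that by simp
      then show ?thesis unfolding E_def[abs_def]
        by (intro DERIV_cong[OF X]) (simp add: field_simps power2_eq_square)
    qed
    have "E 0 \<le> E t"
      by (rule monoW[OF cE dE]) (use that gg0 in \<open>auto intro!: mult_nonneg_nonneg add_nonneg_nonneg\<close>)
    then have "4 * A2 t ^2 + (B1 t - C1 t)^2 + (B2 t + C2 t)^2 \<le> 0" using init unfolding E_def by simp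
    then have "A2 t ^2 = 0" "(B1 t - C1 t)^2 = 0" "(B2 t + C2 t)^2 = 0"
      by (smt (verit) zero_le_power2)+
    then show ?thesis by simp
  qed

  define Dt where "Dt t = A1 t * (1 - A1 t) - B1 t ^2 - B2 t ^2" for t
  have pos: "0 \<le> Dt t" if "0 \<le> t" for t
  proof -
    have cD: "continuous_on {0..t} Dt" unfolding Dt_def
      using cont by (auto intro!: continuous_intros intro: continuous_on_subset)
    have dD: "DERIV Dt s :> - gg s * Dt s + gg s * A1 s ^2" if "0 < s" for s
    proof -
      note X = DERIV_diff[OF DERIV_diff[OF DERIV_mult[OF dA1[OF that] DERIV_diff[OF DERIV_const dA1[OF that]]]
          DERIV_power[where n=2, OF dB1[OF that]]] DERIV_power[where n=2, OF dB2[OF that]]]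
      have hs: "D2 s = 0" "A2 s = 0" "C1 s = B1 s" "C2 s = - B2 s" "D1 s = 1 - A1 s"
        using tr1[of s] tr2[of s] herm[of s] that by auto
      show ?thesis unfolding Dt_def[abs_def]
        by (intro DERIV_cong[OF X]) (simp only: hs, simp add: field_simps power2_eq_square)
    qed
    show ?thesis
    proof (rule barrierA[OF cD])
      show "0 \<le> t" by fact
      show "0 \<le> Dt 0" using init unfolding Dt_def by simp
      fix s assume s: "0 < s" "s < t" "Dt s < 0"
      have "0 \<le> - gg s * Dt s + gg s * A1 s ^2"
        using gg0[of s] s mult_nonneg_nonpos[of "gg s" "Dt s"] by (intro add_nonneg_nonneg) auto
      then show "\<exists>y. DERIV Dt s :> y \<and> 0 \<le> y" using dD[of s] s by blast
    qed
  qed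
  have Prange: "0 \<le> D1 t" "D1 t \<le> 1" "B1 t ^2 + B2 t ^2 \<le> (1 - D1 t) * D1 t" if "0 \<le> t" for t
  proof -
    have a: "A1 t = 1 - D1 t" using tr1[OF that] by simp
    have "0 \<le> A1 t * (1 - A1 t) - B1 t ^2 - B2 t ^2" using pos[OF that] unfolding Dt_def .
    then have ab: "B1 t ^2 + B2 t ^2 \<le> (1 - D1 t) * D1 t" using a by simp
    then have "0 \<le> (1 - D1 t) * D1 t" by (smt (verit) zero_le_power2)
    then show "0 \<le> D1 t" "D1 t \<le> 1" "B1 t ^2 + B2 t ^2 \<le> (1 - D1 t) * D1 t"
      using ab by (auto simp: zero_le_mult_iff)
  qed

  have dP: "DERIV D1 s :> 2 * hx s * B2 s + 2 * hy s * B1 s + gg s * (1 - D1 s)" if "0 < s" for s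
  proof -
    have hs: "C1 s = B1 s" "C2 s = - B2 s" "A1 s = 1 - D1 s"
      using tr1[of s] herm[of s] that by auto
    show ?thesis by (rule DERIV_cong[OF dD1[OF that]]) (simp add: hs algebra_simps)
  qed
  have lt: "D1 t1 < p0" if t1: "0 \<le> t1" "t1 < T" for t1
  proof -
    define f where "f s = R * s + R * (T - t1) - D1 s" for s
    have cf: "continuous_on {0..t1} f" unfolding f_def
      using cont by (auto intro!: continuous_intros intro: continuous_on_subset)
    have "0 < f t1"
    proof (rule barrierB[OF cf])
      show "0 \<le> t1" by fact
      show "0 < f 0" unfolding f_def using init Rpos t1 by simp
      fix s assume s: "0 < s" "s < t1" and fp: "\<forall>u\<in>{0..s}. 0 < f u"
      have "0 < f s" using fp s by auto
      then have "D1 s < R * s + R * (T - t1)" unfolding f_def by simp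
      also have "\<dots> \<le> R * T" using s Rpos by (simp add: algebra_simps)
      finally have Dp: "D1 s \<le> p0" using RT by simp
      have "2 * hx s * B2 s + 2 * hy s * B1 s + gg s * (1 - D1 s) \<le> 2*\<epsilon>*q + G*(1-p0)"
        by (rule rate_bound[OF hb _ _ Dp p0h _ q_def gg0 ggG Gp])
           (use Prange[of s] s assms(3) in auto)
      then have "0 \<le> R - (2 * hx s * B2 s + 2 * hy s * B1 s + gg s * (1 - D1 s))"
        unfolding R_def by simp
      moreover have "DERIV f s :> R - (2 * hx s * B2 s + 2 * hy s * B1 s + gg s * (1 - D1 s))"
        unfolding f_def[abs_def]
        by (rule DERIV_cong[OF DERIV_diff[OF DERIV_add[OF DERIV_cmult[where c=R, OF DERIV_ident] DERIV_const] dP[OF s(1)]]]) simp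
      ultimately show "\<exists>y. DERIV f s :> y \<and> 0 \<le> y" by blast
    qed
    then show ?thesis unfolding f_def using RT by (simp add: algebra_simps)
  qed
  have le: "D1 t \<le> p0" if t: "0 \<le> t" "t \<le> T" for t
  proof (cases "t < T")
    case True then show ?thesis using lt t by force
  next
    case False
    then have tT: "t = T" using t by simp
    have "continuous_on (closure {0..<T}) D1"
      using T0 by (simp) (rule continuous_on_subset[OF cont(7)], auto)
    moreover have "T \<in> closure {0..<T}" using T0 by simp
    ultimately have "D1 T \<le> p0"
      by (rule continuous_le_on_closure) (use lt in \<open>force intro: less_imp_le\<close>)
    then show ?thesis using tT by simp
  qed

  show ?thesis
  proof
    fix t assume "t \<in> {0 .. 2 * p0 / (4 * \<epsilon> * sqrt (p0 - p0^2) + 2 * (\<gamma>0 + \<gamma>) * (1 - p0))}"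
    then have t: "0 \<le> t" "t \<le> T" using Teq by auto
    have "Im (\<rho> t $ 1 $ 1) = 0" using herm[OF t(1)] unfolding A2_def by simp
    moreover have "D1 t \<le> p0" by (rule le[OF t])
    moreover have "A1 t = 1 - D1 t" using tr1[OF t(1)] by simp
    ultimately show "braket ket0 (\<rho> t) ket0 \<in> \<real> \<and> 1 - p0 \<le> Re (braket ket0 (\<rho> t) ket0)
         \<and> Re (braket ket1 (\<rho> t) ket1) \<le> p0"
      unfolding braket_simps complex_is_Real_iff A1_def D1_def by simp
  qed
qed

end
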